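(* Let $H(x,p)$ be a smooth real function and consider the Hamiltonian system $\dot x=H_p$, $\dot p=-H_x$. Consider the scheme $$\frac{x_{n+1}-x_n}{\delta_n}=\frac{H(x_{n+1},p_{n+1})-H(x_{n+1},p_n)}{p_{n+1}-p_n},\qquad \frac{p_{n+1}-p_n}{\delta_n}=\frac{H(x_n,p_n)-H(x_{n+1},p_n)}{x_{n+1}-x_n},$$ where the difference quotients are understood as the corresponding partial derivatives when the denominators vanish. Take $$\delta_n=\frac{2}{\omega_n\cot\frac{\omega_nh_n}{2}+H_{xp}},\qquad \omega_n=\sqrt{H_{xx}H_{pp}-H_{xp}^2},$$ with all derivatives of $H$ evaluated at a point $(\bar x,\bar p)$. Then the scheme is locally exact at $(\bar x,\bar p)$.
   Context: $h_n$ is the time step. The expression $\omega\cot(\omega h/2)$ is an analytic function of $\omega^2$; it is interpreted as such when $\omega^2\le 0$. Linearizing the Hamiltonian system at $(\bar x,\bar p)$, with $x=\bar x+\xi$ and $p=\bar p+\eta$, gives $$\frac{d}{dt}\begin{pmatrix}\xi\\ \eta\end{pmatrix}=F'\begin{pmatrix}\xi\\ \eta\end{pmatrix}+F,\qquad F=\begin{pmatrix}H_p\\ -H_x\end{pmatrix},\qquad F'=\begin{pmatrix}H_{xp}&H_{pp}\\ -H_{xx}&-H_{xp}\end{pmatrix},$$ with derivatives evaluated at $(\bar x,\bar p)$; $F'$ is assumed invertible. The exact discretization of this linear system with time step $h_n$ is $$(\xi_{n+1},\eta_{n+1})^T=e^{h_nF'}(\xi_n,\eta_n)^T+(e^{h_nF'}-1)(F')^{-1}F.$$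 The linearization of the scheme at $(\bar x,\bar p)$ is obtained as follows: - substitute $x_n=\bar x+\xi_n$, $p_n=\bar p+\eta_n$ (and likewise for $n+1$); - keep $\delta_n$ fixed at its value determined by $(\bar x,\bar p)$ and $h_n$; - retain only terms up to first order in $\xi,\eta$. The scheme is locally exact at $(\bar x,\bar p)$ if this linear relation coincides with the exact discretization above, as a relation determining $(\xi_{n+1},\eta_{n+1})$ from $(\xi_n,\eta_n)$. *)

theory Defs
  imports "HOL-Analysis.Analysis"
begin

definition pdx :: "(real \<Rightarrow> real \<Rightarrow> real) \<Rightarrow> real \<Rightarrow> real \<Rightarrow> real" where
  "pdx f x p = deriv (\<lambda>t. f t p) x"

definition pdp :: "(real \<Rightarrow> real \<Rightarrow> real) \<Rightarrow> real \<Rightarrow> real \<Rightarrow> real" where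
  "pdp f x p = deriv (\<lambda>t. f x t) p"

fun pds :: "bool list \<Rightarrow> (real \<Rightarrow> real \<Rightarrow> real) \<Rightarrow> real \<Rightarrow> real \<Rightarrow> real" where
  "pds [] f = f"
| "pds (b # bs) f = (if b then pdx else pdp) (pds bs f)"

definition smooth2 :: "(real \<Rightarrow> real \<Rightarrow> real) \<Rightarrow> bool" where
  "smooth2 f \<longleftrightarrow> (\<forall>bs.
      continuous_on UNIV (\<lambda>(x, p). pds bs f x p) \<and>
      (\<forall>x p. (\<lambda>t. pds bs f t p) differentiable (at x) \<and>
             (\<lambda>t. pds bs f x t) differentiable (at p)))"

section \<open>omega cot(omega h/2) as an analytic function of s = omega^2\<close>

definition wcot :: "real \<Rightarrow> real \<Rightarrow> real" where
  "wcot s h = (if s > 0 then sqrt s * cot (sqrt s * h / 2)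
               else if s = 0 then 2 / h
               else sqrt (- s) * cosh (sqrt (- s) * h / 2) / sinh (sqrt (- s) * h / 2))"

definition rhs1 :: "(real \<Rightarrow> real \<Rightarrow> real) \<Rightarrow> real \<Rightarrow> real \<Rightarrow> real \<Rightarrow> real \<Rightarrow> real" where
  "rhs1 H x0 p0 x1 p1 = (if p1 = p0 then pdp H x1 p0
                         else (H x1 p1 - H x1 p0) / (p1 - p0))"

definition rhs2 :: "(real \<Rightarrow> real \<Rightarrow> real) \<Rightarrow> real \<Rightarrow> real \<Rightarrow> real \<Rightarrow> real \<Rightarrow> real" where
  "rhs2 H x0 p0 x1 p1 = (if x1 = x0 then - pdx H x0 p0
                         else (H x0 p0 - H x1 p0) / (x1 - x0))"

definition scheme_res :: "(real \<Rightarrow> real \<Rightarrow> real) \<Rightarrow> real \<Rightarrow> real \<times> real \<times> real \<times> real \<Rightarrow> real \<times> real" where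
  "scheme_res H \<delta> z = (case z of (x0, p0, x1, p1) \<Rightarrow>
      ((x1 - x0) / \<delta> - rhs1 H x0 p0 x1 p1, (p1 - p0) / \<delta> - rhs2 H x0 p0 x1 p1))"

definition Fvec :: "(real \<Rightarrow> real \<Rightarrow> real) \<Rightarrow> real \<Rightarrow> real \<Rightarrow> real^2" where
  "Fvec H x p = vector [pdp H x p, - pdx H x p]"

definition Fjac :: "(real \<Rightarrow> real \<Rightarrow> real) \<Rightarrow> real \<Rightarrow> real \<Rightarrow> real^2^2" where
  "Fjac H x p = vector [vector [pdp (pdx H) x p, pdp (pdp H) x p],
                        vector [- pdx (pdx H) x p, - pdp (pdx H) x p]]"

definition mpow :: "real^'n^'n \<Rightarrow> nat \<Rightarrow> real^'n^'n" where
  "mpow A n = ((\<lambda>B. A ** B) ^^ n) (mat 1)"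

definition mexp :: "real^'n^'n \<Rightarrow> real^'n^'n" where
  "mexp A = (\<Sum>n. (1 / fact n) *\<^sub>R mpow A n)"

text \<open>Exact discretization with step h of d/dt z = F' z + F.\<close>
definition exact_step :: "(real \<Rightarrow> real \<Rightarrow> real) \<Rightarrow> real \<Rightarrow> real \<Rightarrow> real \<Rightarrow> real^2 \<Rightarrow> real^2" where
  "exact_step H x p h z =
     mexp (h *\<^sub>R Fjac H x p) *v z
     + (mexp (h *\<^sub>R Fjac H x p) - mat 1) *v (matrix_inv (Fjac H x p) *v Fvec H x p)"

end

theory Submission
  imports Defs
begin


lemma sm_dx:
  assumes "smooth2 H"
  shows "((\<lambda>t. pds bs H t p) has_real_derivative pds (True#bs) H x p) (at x)"
  using assms unfolding smooth2_def by (simp add: pdx_def DERIV_deriv_iff_real_differentiable)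

lemma sm_dp:
  assumes "smooth2 H"
  shows "((\<lambda>t. pds bs H x t) has_real_derivative pds (False#bs) H x p) (at p)"
  using assms unfolding smooth2_def by (simp add: pdp_def DERIV_deriv_iff_real_differentiable)

lemma sm_cont:
  assumes "smooth2 H"
  shows "continuous (at z) (\<lambda>(x,p). pds bs H x p)"
  using assms unfolding smooth2_def
  by (metis continuous_on_eq_continuous_at open_UNIV UNIV_I)

lemma schwarz:
  assumes sm: "smooth2 H"
  shows "pdx (pdp H) x p = pdp (pdx H) x p"
proof (rule ccontr)
  define a where "a = (\<lambda>x p. pdp (pdx H) x p)"
  define b where "b = (\<lambda>x p. pdx (pdp H) x p)"
  assume ne: "pdx (pdp H) x p \<noteq> pdp (pdx H) x p"
  define e where "e = \<bar>a x p - b x p\<bar> / 2"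
  have e: "e > 0" using ne by (simp add: e_def a_def b_def)
  have ca: "continuous (at (x,p)) (\<lambda>(x,p). a x p)"
    using sm_cont[OF sm, of "(x,p)" "[False,True]"] by (simp add: a_def)
  have cb: "continuous (at (x,p)) (\<lambda>(x,p). b x p)"
    using sm_cont[OF sm, of "(x,p)" "[True,False]"] by (simp add: b_def)
  obtain ra where ra: "ra > 0" "\<And>z. dist z (x,p) < ra \<Longrightarrow> dist ((\<lambda>(x,p). a x p) z) (a x p) < e"
    using ca e unfolding continuous_at_eps_delta by fastforce
  obtain rb where rb: "rb > 0" "\<And>z. dist z (x,p) < rb \<Longrightarrow> dist ((\<lambda>(x,p). b x p) z) (b x p) < e"
    using cb e unfolding continuous_at_eps_delta by fastforce
  define t where "t = min ra rb / 4"
  have t: "t > 0" using ra rb by (simp add: t_def)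
  have near: "\<And>u v. x \<le> u \<Longrightarrow> u \<le> x + t \<Longrightarrow> p \<le> v \<Longrightarrow> v \<le> p + t \<Longrightarrow>
     \<bar>a u v - a x p\<bar> < e \<and> \<bar>b u v - b x p\<bar> < e"
  proof -
    fix u v assume uv: "x \<le> u" "u \<le> x + t" "p \<le> v" "v \<le> p + t"
    have "dist (u,v) (x,p) \<le> dist u x + dist v p" by (simp add: dist_Pair_Pair sqrt_sum_squares_le_sum)
    also have "\<dots> \<le> 2*t" using uv by (simp add: dist_real_def)
    finally have d: "dist (u,v) (x,p) \<le> 2*t" .
    have "dist (u,v) (x,p) < ra" "dist (u,v) (x,p) < rb" using d t unfolding t_def by linarith+
    from ra(2)[OF this(1)] rb(2)[OF this(2)] show "\<bar>a u v - a x p\<bar> < e \<and> \<bar>b u v - b x p\<bar> < e"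
      by (simp add: dist_real_def)
  qed
  define \<Delta> where "\<Delta> = H (x+t) (p+t) - H (x+t) p - H x (p+t) + H x p"
  have Hx: "\<And>u v. ((\<lambda>u. H u v) has_real_derivative pdx H u v) (at u)"
    using sm_dx[OF sm, of "[]"] by simp
  have Hp: "\<And>u v. ((\<lambda>v. H u v) has_real_derivative pdp H u v) (at v)"
    using sm_dp[OF sm, of "[]"] by simp
  have Hxp: "\<And>u v. ((\<lambda>v. pdx H u v) has_real_derivative a u v) (at v)"
    using sm_dp[OF sm, of "[True]"] by (simp add: a_def)
  have Hpx: "\<And>u v. ((\<lambda>u. pdp H u v) has_real_derivative b u v) (at u)"
    using sm_dx[OF sm, of "[False]"] by (simp add: b_def)
  have D1: "\<And>u. ((\<lambda>u. H u (p+t) - H u p) has_real_derivative (pdx H u (p+t) - pdx H u p)) (at u)"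
    by (intro derivative_intros Hx)
  obtain c1 where c1: "x < c1" "c1 < x + t"
    "(H (x+t) (p+t) - H (x+t) p) - (H x (p+t) - H x p) = t * (pdx H c1 (p+t) - pdx H c1 p)"
    using MVT2[of x "x+t" "\<lambda>u. H u (p+t) - H u p" "\<lambda>u. pdx H u (p+t) - pdx H u p"] t D1
    by auto
  obtain c2 where c2: "p < c2" "c2 < p + t" "pdx H c1 (p+t) - pdx H c1 p = t * a c1 c2"
    using MVT2[of p "p+t" "\<lambda>v. pdx H c1 v" "\<lambda>v. a c1 v"] t Hxp by auto
  have D2: "\<And>v. ((\<lambda>v. H (x+t) v - H x v) has_real_derivative (pdp H (x+t) v - pdp H x v)) (at v)"
    by (intro derivative_intros Hp)
  obtain d1 where d1: "p < d1" "d1 < p + t"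
    "(H (x+t) (p+t) - H x (p+t)) - (H (x+t) p - H x p) = t * (pdp H (x+t) d1 - pdp H x d1)"
    using MVT2[of p "p+t" "\<lambda>v. H (x+t) v - H x v" "\<lambda>v. pdp H (x+t) v - pdp H x v"] t D2
    by auto
  obtain d2 where d2: "x < d2" "d2 < x + t" "pdp H (x+t) d1 - pdp H x d1 = t * b d2 d1"
    using MVT2[of x "x+t" "\<lambda>u. pdp H u d1" "\<lambda>u. b u d1"] t Hpx by auto
  have "t * t * a c1 c2 = t * t * b d2 d1"
    using c1(3) c2(3) d1(3) d2(3) by (simp add: algebra_simps)
  hence eq: "a c1 c2 = b d2 d1" using t by simp
  have "\<bar>a c1 c2 - a x p\<bar> < e" using near[of c1 c2] c1 c2 by auto
  moreover have "\<bar>b d2 d1 - b x p\<bar> < e" using near[of d2 d1] d1 d2 by auto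
  ultimately show False using eq unfolding e_def by (simp add: abs_if split: if_splits)
qed



lemma between_sq:
  fixes a b z p0 :: real
  assumes "min a b \<le> z" "z \<le> max a b"
  shows "(z - p0)^2 \<le> (a - p0)^2 + (b - p0)^2"
proof -
  have "\<bar>z - p0\<bar> \<le> max \<bar>a - p0\<bar> \<bar>b - p0\<bar>" using assms by (auto simp: abs_if max_def min_def split: if_splits)
  hence "\<bar>z - p0\<bar>^2 \<le> (max \<bar>a - p0\<bar> \<bar>b - p0\<bar>)^2" by (intro power_mono) auto
  also have "\<dots> \<le> (a - p0)^2 + (b - p0)^2" by (auto simp: max_def)
  finally show ?thesis by simp
qed

lemma divdiff_deriv:
  fixes f Q :: "real \<Rightarrow> real \<Rightarrow> real"
  assumes fd: "\<And>x p. ((\<lambda>t. f x t) has_real_derivative Q x p) (at p)"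
  assumes Qd: "((\<lambda>(x,p). Q x p) has_derivative (\<lambda>(u,v). A*u + B * v)) (at (x0,p0))"
  shows "((\<lambda>(x,a,b). if b = a then Q x a else (f x b - f x a)/(b-a)) has_derivative
          (\<lambda>(u,v,w). A*u + B*(v+w)/2)) (at (x0,p0,p0))"
  unfolding has_derivative_at_alt
proof (intro conjI allI impI)
  show "bounded_linear (\<lambda>(u::real,v::real,w::real). A*u + B*(v+w)/2)"
    unfolding linear_conv_bounded_linear[symmetric] by (rule linearI) (simp_all add: split_beta field_simps)
next
  fix e :: real assume e: "e > 0"
  from Qd[unfolded has_derivative_at_alt] e obtain d where d: "d > 0"
    "\<And>y. norm (y - (x0,p0)) < d \<Longrightarrow>
       norm ((\<lambda>(x,p). Q x p) y - (\<lambda>(x,p). Q x p) (x0,p0) - (\<lambda>(u,v). A*u + B * v) (y - (x0,p0)))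
         \<le> e * norm (y - (x0,p0))" by blast
  show "\<exists>d>0. \<forall>y. norm (y - (x0, p0, p0)) < d \<longrightarrow>
     norm ((\<lambda>(x,a,b). if b = a then Q x a else (f x b - f x a)/(b-a)) y -
           (\<lambda>(x,a,b). if b = a then Q x a else (f x b - f x a)/(b-a)) (x0, p0, p0) -
           (\<lambda>(u,v,w). A*u + B*(v+w)/2) (y - (x0, p0, p0))) \<le> e * norm (y - (x0, p0, p0))"
  proof (intro exI[of _ d] conjI allI impI d(1))
    fix y :: "real \<times> real \<times> real"
    obtain x a b where y: "y = (x,a,b)" by (cases y) auto
    define N where "N = norm (y - (x0,p0,p0))"
    assume "norm (y - (x0, p0, p0)) < d"
    hence Nd: "N < d" by (simp add: N_def)
    have N: "N = sqrt ((x-x0)^2 + ((a-p0)^2 + (b-p0)^2))"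
      by (simp add: N_def y norm_Pair)
    have bnd: "\<bar>Q x z - Q x0 p0 - A*(x-x0) - B*(z-p0)\<bar> \<le> e * N"
      if z: "min a b \<le> z" "z \<le> max a b" for z
    proof -
      have "norm ((x,z) - (x0,p0)) = sqrt ((x-x0)^2 + (z-p0)^2)" by (simp add: norm_Pair)
      also have "\<dots> \<le> N" unfolding N using between_sq[OF z, of p0] by simp
      finally have le: "norm ((x,z) - (x0,p0)) \<le> N" .
      have "\<bar>Q x z - Q x0 p0 - A*(x-x0) - B*(z-p0)\<bar> \<le> e * norm ((x,z) - (x0,p0))"
        using d(2)[of "(x,z)"] le Nd by simp
      also have "\<dots> \<le> e * N" using le e by (simp add: mult_left_mono)
      finally show ?thesis .
    qed
    define c where "c = Q x0 p0 + A*(x-x0)"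
    define \<phi> where "\<phi> = (\<lambda>p. f x p - c*p - B*(p-p0)^2/2)"
    have phid: "(\<phi> has_real_derivative (Q x p - c - B*(p-p0))) (at p)" for p
      unfolding \<phi>_def by (auto intro!: derivative_eq_intros fd simp: power2_eq_square field_simps)
    have main: "\<exists>z. min a b \<le> z \<and> z \<le> max a b \<and>
       (if b = a then Q x a else (f x b - f x a)/(b-a)) - Q x0 p0 - (A*(x-x0) + B*((a-p0)+(b-p0))/2)
        = Q x z - Q x0 p0 - A*(x-x0) - B*(z-p0)"
    proof (cases "b = a")
      case True thus ?thesis by (intro exI[of _ a]) (auto simp: field_simps)
    next
      case False
      have "\<exists>z. min a b < z \<and> z < max a b \<and> \<phi> (max a b) - \<phi> (min a b) = (max a b - min a b) * (Q x z - c - B*(z-p0))"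
        using MVT2[of "min a b" "max a b" \<phi> "\<lambda>p. Q x p - c - B*(p-p0)"] False phid
        by (auto simp: min_def max_def)
      then obtain z where z: "min a b < z" "z < max a b"
        "\<phi> (max a b) - \<phi> (min a b) = (max a b - min a b) * (Q x z - c - B*(z-p0))" by blast
      have "\<phi> b - \<phi> a = (b - a) * (Q x z - c - B*(z-p0))"
        using z(3) by (cases "a \<le> b") (auto simp: min_def max_def algebra_simps)
      hence "(f x b - f x a)/(b-a) - Q x0 p0 - (A*(x-x0) + B*((a-p0)+(b-p0))/2)
        = Q x z - Q x0 p0 - A*(x-x0) - B*(z-p0)"
        using False unfolding \<phi>_def c_def by (simp add: field_simps power2_eq_square)
      thus ?thesis using False z by (intro exI[of _ z]) auto
    qed
    then obtain z where z: "min a b \<le> z" "z \<le> max a b"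
      "(if b = a then Q x a else (f x b - f x a)/(b-a)) - Q x0 p0 - (A*(x-x0) + B*((a-p0)+(b-p0))/2)
        = Q x z - Q x0 p0 - A*(x-x0) - B*(z-p0)" by blast
    show "norm ((\<lambda>(x,a,b). if b = a then Q x a else (f x b - f x a)/(b-a)) y -
           (\<lambda>(x,a,b). if b = a then Q x a else (f x b - f x a)/(b-a)) (x0, p0, p0) -
           (\<lambda>(u,v,w). A*u + B*(v+w)/2) (y - (x0, p0, p0))) \<le> e * norm (y - (x0, p0, p0))"
      using z(3) bnd[OF z(1,2)] unfolding N_def[symmetric] by (simp add: y add_divide_distrib)
  qed
qed



lemma joint_deriv:
  fixes Q Qy :: "real \<Rightarrow> real \<Rightarrow> real"
  assumes dx: "((\<lambda>x. Q x p0) has_real_derivative A) (at x0)"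
  assumes dy: "\<And>x y. ((\<lambda>y. Q x y) has_real_derivative Qy x y) (at y)"
  assumes cont: "continuous (at (x0,p0)) (\<lambda>(x,y). Qy x y)"
  shows "((\<lambda>(x,p). Q x p) has_derivative (\<lambda>(u,v). A*u + Qy x0 p0 * v)) (at (x0,p0))"
proof -
  have fx: "((\<lambda>x. Q x p0) has_derivative (\<lambda>u. A*u)) (at x0 within UNIV)"
    using dx by (simp add: has_field_derivative_def)
  have fy: "((\<lambda>y. Q x y) has_derivative blinfun_apply (blinfun_mult_right (Qy x y))) (at y within UNIV)" for x y
    using dy[of x y] by (simp add: has_field_derivative_def)
  have c2: "continuous (at (x0,p0) within UNIV \<times> UNIV) (\<lambda>(x,y). blinfun_mult_right (Qy x y))"
  proof -
    have "continuous (at (x0,p0)) (\<lambda>z. blinfun_mult_right ((\<lambda>(x,y). Qy x y) z))"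
      using bounded_linear.continuous[OF bounded_linear_blinfun_mult_right cont] .
    thus ?thesis by (simp add: case_prod_beta')
  qed
  have "((\<lambda>(x,y). Q x y) has_derivative (\<lambda>(tx,ty). A*tx + blinfun_mult_right (Qy x0 p0) ty)) (at (x0,p0) within UNIV \<times> UNIV)"
    by (rule has_derivative_partialsI[OF fx fy c2]) auto
  thus ?thesis by simp
qed



lemma mpow_Suc: "mpow A (Suc n) = A ** mpow A n"
  by (simp add: mpow_def)

lemma mpow_scale: "mpow (h *\<^sub>R (A::real^'n^'n)) n = (h^n) *\<^sub>R mpow A n"
  by (induction n) (simp_all add: mpow_Suc matrix_scalar_ac scalar_matrix_assoc[symmetric] mpow_def)

lemma mpow_sq:
  fixes A :: "real^'n^'n"
  assumes sq: "A ** A = (-s) *\<^sub>R mat 1"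
  shows "mpow A n = (if even n then (-s)^(n div 2) *\<^sub>R mat 1 else (-s)^(n div 2) *\<^sub>R A)"
proof (induction n)
  case 0 thus ?case by (simp add: mpow_def)
next
  case (Suc n)
  show ?case
  proof (cases "even n")
    case True
    thus ?thesis using Suc by (simp add: mpow_Suc matrix_scalar_ac)
  next
    case False
    hence "Suc n div 2 = Suc (n div 2)" by presburger
    thus ?thesis using Suc False by (simp add: mpow_Suc matrix_scalar_ac scalar_matrix_assoc[symmetric] sq)
  qed
qed

lemma mexp_sq:
  fixes A :: "real^'n^'n"
  assumes sq: "A ** A = (-s) *\<^sub>R mat 1"
  assumes cs: "(\<lambda>n. if even n then h^n * (-s)^(n div 2) / fact n else 0) sums C"
  assumes ds: "(\<lambda>n. if even n then 0 else h^n * (-s)^(n div 2) / fact n) sums D"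
  shows "mexp (h *\<^sub>R A) = C *\<^sub>R mat 1 + D *\<^sub>R A"
proof -
  have "(\<lambda>n. (if even n then h^n * (-s)^(n div 2) / fact n else 0) *\<^sub>R mat 1
            + (if even n then 0 else h^n * (-s)^(n div 2) / fact n) *\<^sub>R A) sums (C *\<^sub>R mat 1 + D *\<^sub>R A)"
    by (intro sums_add sums_scaleR_left cs ds)
  moreover have "(\<lambda>n. (if even n then h^n * (-s)^(n div 2) / fact n else 0) *\<^sub>R mat 1
            + (if even n then 0 else h^n * (-s)^(n div 2) / fact n) *\<^sub>R A)
        = (\<lambda>n. (1 / fact n) *\<^sub>R mpow (h *\<^sub>R A) n)"
    by (rule ext) (simp add: mpow_scale mpow_sq[OF sq])
  ultimately show ?thesis unfolding mexp_def by (simp add: sums_iff)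
qed



definition cser :: "real \<Rightarrow> real \<Rightarrow> nat \<Rightarrow> real" where
  "cser s h n = (if even n then h^n * (-s)^(n div 2) / fact n else 0)"
definition dser :: "real \<Rightarrow> real \<Rightarrow> nat \<Rightarrow> real" where
  "dser s h n = (if even n then 0 else h^n * (-s)^(n div 2) / fact n)"

lemma cser_pos:
  assumes "s > 0"
  shows "cser s h sums cos (sqrt s * h)"
proof -
  have "(\<lambda>n. cos_coeff n *\<^sub>R (sqrt s * h)^n) = cser s h"
  proof
    fix n show "cos_coeff n *\<^sub>R (sqrt s * h)^n = cser s h n"
    proof (cases "even n")
      case True then obtain k where k: "n = 2*k" by blast
      have "sqrt s ^ (2*k) = s^k" using assms by (simp add: power_mult)
      thus ?thesis using assms by (simp add: k cos_coeff_def cser_def power_mult_distrib power_minus')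
    next
      case False thus ?thesis by (simp add: cos_coeff_def cser_def)
    qed
  qed
  thus ?thesis using cos_converges[of "sqrt s * h"] by simp
qed

lemma dser_pos:
  assumes "s > 0"
  shows "dser s h sums (sin (sqrt s * h) / sqrt s)"
proof -
  have "(\<lambda>n. sin_coeff n *\<^sub>R (sqrt s * h)^n / sqrt s) = dser s h"
  proof
    fix n show "sin_coeff n *\<^sub>R (sqrt s * h)^n / sqrt s = dser s h n"
    proof (cases "even n")
      case False then obtain k where k: "n = 2*k+1" using oddE by blast
      have "sqrt s ^ (2*k) = s^k" using assms by (simp add: power_mult)
      thus ?thesis using assms by (simp add: k sin_coeff_def dser_def power_mult_distrib power_minus')
    next
      case True thus ?thesis by (simp add: sin_coeff_def dser_def)
    qed
  qed
  thus ?thesis using sums_divide[OF sin_converges[of "sqrt s * h"], of "sqrt s"] by simp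
qed

lemma cser_neg:
  assumes "s < 0"
  shows "cser s h sums cosh (sqrt (-s) * h)"
proof -
  have "(\<lambda>n. if even n then (sqrt (-s) * h) ^ n /\<^sub>R fact n else 0) = cser s h"
  proof
    fix n show "(if even n then (sqrt (-s) * h) ^ n /\<^sub>R fact n else 0) = cser s h n"
    proof (cases "even n")
      case True then obtain k where k: "n = 2*k" by blast
      have "sqrt (-s) ^ (2*k) = (-s)^k" using assms by (simp add: power_mult)
      thus ?thesis using assms by (simp add: k cser_def power_mult_distrib divide_inverse mult_ac)
    next
      case False thus ?thesis by (simp add: cser_def)
    qed
  qed
  thus ?thesis using cosh_converges[of "sqrt (-s) * h"] by simp
qed

lemma dser_neg:
  assumes "s < 0"
  shows "dser s h sums (sinh (sqrt (-s) * h) / sqrt (-s))"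
proof -
  have "(\<lambda>n. (if even n then 0 else (sqrt (-s) * h) ^ n /\<^sub>R fact n) / sqrt (-s)) = dser s h"
  proof
    fix n show "(if even n then 0 else (sqrt (-s) * h) ^ n /\<^sub>R fact n) / sqrt (-s) = dser s h n"
    proof (cases "even n")
      case False then obtain k where k: "n = 2*k+1" using oddE by blast
      have "sqrt (-s) ^ (2*k) = (-s)^k" using assms by (simp add: power_mult)
      thus ?thesis using assms by (simp add: k dser_def power_mult_distrib divide_inverse mult_ac)
    next
      case True thus ?thesis by (simp add: dser_def)
    qed
  qed
  thus ?thesis using sums_divide[OF sinh_converges[of "sqrt (-s) * h"], of "sqrt (-s)"] by simp
qed

lemma cser_zero: "cser 0 h sums 1"
proof -
  have "cser 0 h = (\<lambda>n. if n = 0 then 1 else 0)"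
    by (rule ext) (auto simp: cser_def)
  thus ?thesis using sums_single[of 0 "\<lambda>_. 1::real"] by simp
qed

lemma dser_zero: "dser 0 h sums h"
proof -
  have "dser 0 h = (\<lambda>n. if n = 1 then h else 0)"
    by (rule ext) (auto simp: dser_def elim: oddE)
  thus ?thesis using sums_single[of 1 "\<lambda>_. h"] by simp
qed



lemma CD_ident:
  fixes s h :: real
  assumes h: "h > 0" and cotd: "s > 0 \<Longrightarrow> sin (sqrt s * h / 2) \<noteq> 0"
  shows "\<exists>C D. cser s h sums C \<and> dser s h sums D \<and> wcot s h * D - C = 1 \<and>
      wcot s h * C + s * D = wcot s h \<and> (wcot s h)^2 + s \<noteq> 0"
proof (cases "s > 0")
  case True
  define w where "w = sqrt s"
  define th where "th = w * h / 2"
  have w: "w > 0" "w^2 = s" using True by (auto simp: w_def)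
  have wh: "w * h = 2 * th" by (simp add: th_def)
  define sn where "sn = sin th"
  define cs where "cs = cos th"
  have sn: "sn \<noteq> 0" using cotd True by (simp add: sn_def th_def w_def)
  have sc: "sn^2 + cs^2 = 1" by (simp add: sn_def cs_def)
  have K: "wcot s h = w * cs / sn" using True by (simp add: wcot_def Transcendental.cot_def w_def th_def sn_def cs_def)
  have C: "cos (sqrt s * h) = cs^2 - sn^2" by (simp add: w_def[symmetric] wh cos_double cs_def sn_def)
  have D: "sin (sqrt s * h) / sqrt s = 2 * sn * cs / w" by (simp add: w_def[symmetric] wh sin_double cs_def sn_def)
  show ?thesis
  proof (intro exI conjI)
    show "cser s h sums (cos (sqrt s * h))" by (rule cser_pos[OF True])
    show "dser s h sums (sin (sqrt s * h) / sqrt s)" by (rule dser_pos[OF True])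
    show "wcot s h * (sin (sqrt s * h) / sqrt s) - cos (sqrt s * h) = 1"
      unfolding K C D using sn w(1) sc by (simp add: field_simps power2_eq_square; algebra)
    show "wcot s h * cos (sqrt s * h) + s * (sin (sqrt s * h) / sqrt s) = wcot s h"
    proof -
      have "w * cs / sn * (cs^2 - sn^2) + w^2 * (2 * sn * cs / w) = w * cs / sn"
        using sn w(1) sc by (simp add: field_simps power2_eq_square; algebra)
      thus ?thesis unfolding K C D w(2) .
    qed
    show "(wcot s h)^2 + s \<noteq> 0" using True add_nonneg_pos[OF zero_le_power2[of "wcot s h"] True] by linarith
  qed
next
  case False
  show ?thesis
  proof (cases "s = 0")
    case True
    show ?thesis
    proof (intro exI conjI)
      show "cser s h sums 1" using cser_zero True by simp
      show "dser s h sums h" using dser_zero True by simp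
      show "wcot s h * h - 1 = 1" using True h by (simp add: wcot_def)
      show "wcot s h * 1 + s * h = wcot s h" using True by simp
      show "(wcot s h)^2 + s \<noteq> 0" using True h by (simp add: wcot_def)
    qed
  next
    case F2: False
    hence neg: "s < 0" using False by simp
    define w where "w = sqrt (-s)"
    define th where "th = w * h / 2"
    have w: "w > 0" "w^2 = -s" using neg by (auto simp: w_def)
    have th: "th > 0" using w h by (simp add: th_def)
    have wh: "w * h = 2 * th" by (simp add: th_def)
    define sn where "sn = sinh th"
    define cs where "cs = cosh th"
    have sn: "sn > 0" using th by (simp add: sn_def)
    have sc: "cs^2 = sn^2 + 1" by (simp add: sn_def cs_def cosh_square_eq)
    have K: "wcot s h = w * cs / sn" using False F2 by (simp add: wcot_def w_def th_def sn_def cs_def)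
    have C: "cosh (sqrt (-s) * h) = cs^2 + sn^2" by (simp add: w_def[symmetric] wh cosh_double cs_def sn_def)
    have D: "sinh (sqrt (-s) * h) / sqrt (-s) = 2 * sn * cs / w" by (simp add: w_def[symmetric] wh sinh_double cs_def sn_def)
    have s: "s = -(w^2)" using w by simp
    show ?thesis
    proof (intro exI conjI)
      show "cser s h sums (cosh (sqrt (-s) * h))" by (rule cser_neg[OF neg])
      show "dser s h sums (sinh (sqrt (-s) * h) / sqrt (-s))" by (rule dser_neg[OF neg])
      show "wcot s h * (sinh (sqrt (-s) * h) / sqrt (-s)) - cosh (sqrt (-s) * h) = 1"
        unfolding K C D using sn w(1) sc by (simp add: field_simps power2_eq_square; algebra)
      show "wcot s h * cosh (sqrt (-s) * h) + s * (sinh (sqrt (-s) * h) / sqrt (-s)) = wcot s h"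
      proof -
        have "w * cs / sn * (cs^2 + sn^2) + (-(w^2)) * (2 * sn * cs / w) = w * cs / sn"
          using sn w(1) sc by (simp add: field_simps power2_eq_square; algebra)
        thus ?thesis by (simp only: K C D) (simp add: s)
      qed
      have "(w * cs / sn)^2 + -(w^2) = w^2 / sn^2"
        using sn sc by (simp add: field_simps power2_eq_square; algebra)
      thus "(wcot s h)^2 + s \<noteq> 0" unfolding K using w(1) sn s by simp
    qed
  qed
qed


lemma alg:
  fixes K C D s e b c Hp Hx xA yA xB yB :: real
  assumes r1: "K*D - C = 1" and r2: "K*C + s*D = K" and s0: "s \<noteq> 0" and se: "s = e*b - c^2"
    and kn: "K^2 + s \<noteq> 0"
  defines "g1 \<equiv> -(c*Hp - b*Hx)/s" and "g2 \<equiv> -(-e*Hp + c*Hx)/s"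
  defines "X1 \<equiv> C*xA + D*(c*xA + b*yA) + (C-1)*g1 + D*(c*g1 + b*g2)"
      and "X2 \<equiv> C*yA + D*(-e*xA - c*yA) + (C-1)*g2 + D*(-e*g1 - c*g2)"
  shows "((xB-xA)*(K+c)/2 - (c*xB + b*(yA+yB)/2) - Hp = 0 \<and>
          (yB-yA)*(K+c)/2 + (c*yA + e*(xA+xB)/2) + Hx = 0) \<longleftrightarrow> (xB = X1 \<and> yB = X2)"
proof -
  have i1: "(xB-xA)*(K+c)/2 - (c*xB + b*(yA+yB)/2) - Hp = (K-c)/2*(xB-X1) - b/2*(yB-X2)"
    unfolding X1_def X2_def g1_def g2_def using s0
    apply (simp add: field_simps)
    using r1 r2 se apply algebra
    done
  have i2: "(yB-yA)*(K+c)/2 + (c*yA + e*(xA+xB)/2) + Hx = e/2*(xB-X1) + (K+c)/2*(yB-X2)"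
    unfolding X1_def X2_def g1_def g2_def using s0
    apply (simp add: field_simps)
    using r1 r2 se apply algebra
    done
  have det: "(K-c)/2 * ((K+c)/2) + b/2 * (e/2) \<noteq> 0"
  proof
    assume "(K-c)/2 * ((K+c)/2) + b/2 * (e/2) = 0"
    hence "K^2 + s = 0" unfolding se by (simp add: field_simps power2_eq_square; simp add: algebra_simps)
    thus False using kn by simp
  qed
  define u where "u = xB - X1"
  define v where "v = yB - X2"
  have "((K-c)/2*u - b/2* v = 0 \<and> e/2*u + (K+c)/2* v = 0) \<longleftrightarrow> (u = 0 \<and> v = 0)"
  proof
    assume h: "(K-c)/2*u - b/2* v = 0 \<and> e/2*u + (K+c)/2* v = 0"
    have "((K-c)/2 * ((K+c)/2) + b/2 * (e/2)) * u = (K+c)/2 * ((K-c)/2*u - b/2* v) + b/2*(e/2*u + (K+c)/2* v)"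
      by (simp add: field_simps)
    hence "((K-c)/2 * ((K+c)/2) + b/2 * (e/2)) * u = 0" using h by simp
    moreover have "((K-c)/2 * ((K+c)/2) + b/2 * (e/2)) * v = -e/2 * ((K-c)/2*u - b/2* v) + (K-c)/2*(e/2*u + (K+c)/2* v)"
      by (simp add: field_simps)
    hence "((K-c)/2 * ((K+c)/2) + b/2 * (e/2)) * v = 0" using h by simp
    ultimately show "u = 0 \<and> v = 0" using det by simp
  qed simp
  thus ?thesis unfolding i1 i2 u_def v_def by simp
qed

lemma sm_cont_swap:
  assumes "smooth2 H"
  shows "continuous (at z) (\<lambda>(p,x). pds bs H x p)"
proof -
  have "continuous_on (UNIV \<times> UNIV) (\<lambda>(x,p). pds bs H x p)" using assms unfolding smooth2_def by simp
  hence "continuous_on (UNIV \<times> UNIV) (\<lambda>(p,x). pds bs H x p)" by (rule continuous_on_swap_args)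
  thus ?thesis by (metis continuous_on_eq_continuous_at open_UNIV UNIV_I UNIV_Times_UNIV)
qed

theorem proposition5p4:
  fixes H :: "real \<Rightarrow> real \<Rightarrow> real" and xb pb h :: real
  defines "Hxx \<equiv> pdx (pdx H) xb pb"
      and "Hxp \<equiv> pdp (pdx H) xb pb"
      and "Hpp \<equiv> pdp (pdp H) xb pb"
  defines "s \<equiv> Hxx * Hpp - Hxp ^ 2"
  defines "\<delta> \<equiv> 2 / (wcot s h + Hxp)"
  assumes smooth: "smooth2 H"
      and step_pos: "h > 0"
      and Finv: "invertible (Fjac H xb pb)"
      and cot_def: "s > 0 \<Longrightarrow> sin (sqrt s * h / 2) \<noteq> 0"
      and denom: "wcot s h + Hxp \<noteq> 0"
  shows "\<exists>L. (scheme_res H \<delta> has_derivative L) (at (xb, pb, xb, pb)) \<and>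
             (\<forall>\<xi>0 \<eta>0 \<xi>1 \<eta>1.
                scheme_res H \<delta> (xb, pb, xb, pb) + L (\<xi>0, \<eta>0, \<xi>1, \<eta>1) = 0
                \<longleftrightarrow> vector [\<xi>1, \<eta>1] = exact_step H xb pb h (vector [\<xi>0, \<eta>0]))"
proof -
  define K where "K = wcot s h"
  define Hp where "Hp = pdp H xb pb"
  define Hx where "Hx = pdx H xb pb"
  have sym: "pdx (pdp H) xb pb = Hxp" using schwarz[OF smooth] by (simp add: Hxp_def)
  have Q1: "((\<lambda>(x,p). pdp H x p) has_derivative (\<lambda>(u,v). Hxp*u + Hpp * v)) (at (xb,pb))"
  proof -
    have dx: "((\<lambda>x. pdp H x pb) has_real_derivative pdx (pdp H) xb pb) (at xb)"
      using sm_dx[OF smooth, of "[False]"] by simp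
    have dy: "\<And>x y. ((\<lambda>y. pdp H x y) has_real_derivative pdp (pdp H) x y) (at y)"
      using sm_dp[OF smooth, of "[False]"] by simp
    have ct: "continuous (at (xb,pb)) (\<lambda>(x,y). pdp (pdp H) x y)"
      using sm_cont[OF smooth, of "(xb,pb)" "[False,False]"] by simp
    show ?thesis using joint_deriv[OF dx dy ct] by (simp add: sym Hpp_def)
  qed
  define g1 where "g1 = (\<lambda>(x,a,b). if b = a then pdp H x a else (H x b - H x a)/(b-a))"
  have G1d: "(g1 has_derivative (\<lambda>(u,v,w). Hxp*u + Hpp*(v+w)/2)) (at (xb,pb,pb))"
    unfolding g1_def
    by (rule divdiff_deriv[OF _ Q1]) (use sm_dp[OF smooth, of "[]"] in simp)
  have Q2: "((\<lambda>(p,x). pdx H x p) has_derivative (\<lambda>(u,v). Hxp*u + Hxx * v)) (at (pb,xb))"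
  proof -
    have dx: "((\<lambda>p. pdx H xb p) has_real_derivative Hxp) (at pb)"
      using sm_dp[OF smooth, of "[True]"] by (simp add: Hxp_def)
    have dy: "\<And>x y. ((\<lambda>y. pdx H y x) has_real_derivative pdx (pdx H) y x) (at y)"
      using sm_dx[OF smooth, of "[True]"] by simp
    have ct: "continuous (at (pb,xb)) (\<lambda>(x,y). pdx (pdx H) y x)"
      using sm_cont_swap[OF smooth, of "(pb,xb)" "[True,True]"] by simp
    show ?thesis using joint_deriv[of "\<lambda>p x. pdx H x p", OF dx dy ct] by (simp add: Hxx_def)
  qed
  define g2 where "g2 = (\<lambda>(p,a,b). if b = a then pdx H a p else (H b p - H a p)/(b-a))"
  have G2d: "(g2 has_derivative (\<lambda>(u,v,w). Hxp*u + Hxx*(v+w)/2)) (at (pb,xb,xb))"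
    unfolding g2_def
    by (rule divdiff_deriv[of "\<lambda>p x. H x p", OF _ Q2]) (use sm_dx[OF smooth, of "[]"] in simp)
  define l1 where "l1 = (\<lambda>z::real\<times>real\<times>real\<times>real. (fst (snd (snd z)), fst (snd z), snd (snd (snd z))))"
  define l2 where "l2 = (\<lambda>z::real\<times>real\<times>real\<times>real. (fst (snd z), fst z, fst (snd (snd z))))"
  have l1d: "(l1 has_derivative l1) (at (xb,pb,xb,pb))" unfolding l1_def
    by (intro has_derivative_Pair has_derivative_fst has_derivative_snd has_derivative_ident)
  have l2d: "(l2 has_derivative l2) (at (xb,pb,xb,pb))" unfolding l2_def
    by (intro has_derivative_Pair has_derivative_fst has_derivative_snd has_derivative_ident)
  have b1: "l1 (xb,pb,xb,pb) = (xb,pb,pb)" by (simp add: l1_def)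
  have b2: "l2 (xb,pb,xb,pb) = (pb,xb,xb)" by (simp add: l2_def)
  have c1: "((\<lambda>z. g1 (l1 z)) has_derivative (\<lambda>z. (\<lambda>(u,v,w). Hxp*u + Hpp*(v+w)/2) (l1 z))) (at (xb,pb,xb,pb))"
    by (rule has_derivative_compose[OF l1d]) (simp add: b1 G1d)
  have c2: "((\<lambda>z. g2 (l2 z)) has_derivative (\<lambda>z. (\<lambda>(u,v,w). Hxp*u + Hxx*(v+w)/2) (l2 z))) (at (xb,pb,xb,pb))"
    by (rule has_derivative_compose[OF l2d]) (simp add: b2 G2d)
  have dnz: "\<delta> \<noteq> 0" using denom by (simp add: \<delta>_def)
  have sr: "scheme_res H \<delta> = (\<lambda>z. ((fst (snd (snd z)) - fst z) / \<delta> - g1 (l1 z),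
                                      (snd (snd (snd z)) - fst (snd z)) / \<delta> + g2 (l2 z)))"
  proof (rule ext)
    fix z :: "real\<times>real\<times>real\<times>real"
    obtain x0 p0 x1 p1 where z: "z = (x0,p0,x1,p1)" by (cases z) auto
    have "rhs2 H x0 p0 x1 p1 = - g2 (p0, x0, x1)"
      by (simp add: rhs2_def g2_def minus_divide_left)
    thus "scheme_res H \<delta> z = ((fst (snd (snd z)) - fst z) / \<delta> - g1 (l1 z),
                                      (snd (snd (snd z)) - fst (snd z)) / \<delta> + g2 (l2 z))"
      by (simp add: z scheme_res_def rhs1_def g1_def l1_def l2_def)
  qed
  define L where "L = (\<lambda>z::real\<times>real\<times>real\<times>real. ((fst (snd (snd z)) - fst z) / \<delta> - (\<lambda>(u,v,w). Hxp*u + Hpp*(v+w)/2) (l1 z),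
                                      (snd (snd (snd z)) - fst (snd z)) / \<delta> + (\<lambda>(u,v,w). Hxp*u + Hxx*(v+w)/2) (l2 z)))"
  have Ld: "(scheme_res H \<delta> has_derivative L) (at (xb, pb, xb, pb))"
    unfolding sr L_def
    using dnz by (auto intro!: derivative_eq_intros c1 c2)
  have base: "scheme_res H \<delta> (xb,pb,xb,pb) = (-Hp, Hx)"
    by (simp add: scheme_res_def rhs1_def rhs2_def Hp_def Hx_def)
  have Lval: "\<And>a b c d. L (a,b,c,d) = ((c-a)/\<delta> - (Hxp*c + Hpp*(b+d)/2), (d-b)/\<delta> + (Hxp*b + Hxx*(a+c)/2))"
    by (simp add: L_def l1_def l2_def)
  define A where "A = Fjac H xb pb"
  have Aent: "A = vector[vector[Hxp, Hpp], vector[-Hxx, -Hxp]]"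
    by (simp add: A_def Fjac_def Hxp_def Hpp_def Hxx_def)
  have sq: "A ** A = (-s) *\<^sub>R mat 1"
    by (simp add: vec_eq_iff forall_2 matrix_matrix_mult_def sum_2 mat_def Aent s_def power2_eq_square)
  obtain C D where CD: "cser s h sums C" "dser s h sums D" "K*D - C = 1" "K*C + s*D = K" "K^2+s \<noteq> 0"
    using CD_ident[OF step_pos cot_def] unfolding K_def by blast
  have E: "mexp (h *\<^sub>R A) = C *\<^sub>R mat 1 + D *\<^sub>R A"
    using CD(1,2) by (intro mexp_sq[OF sq]) (simp_all add: cser_def[abs_def] dser_def[abs_def])
  have s0: "s \<noteq> 0"
  proof -
    have "det A \<noteq> 0" using Finv invertible_det_nz unfolding A_def by blast
    thus ?thesis by (simp add: det_2 Aent s_def power2_eq_square mult.commute)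
  qed
  define B where "B = (-1/s) *\<^sub>R A"
  have gen1: "A ** (k *\<^sub>R A) = (k * (-s)) *\<^sub>R mat 1" for k
    by (simp add: matrix_scalar_ac scalar_matrix_assoc[symmetric] sq)
  have gen2: "(k *\<^sub>R A) ** A = (k * (-s)) *\<^sub>R mat 1" for k
    by (simp add: scalar_matrix_assoc[symmetric] sq)
  have AB: "A ** B = mat 1" unfolding B_def gen1 using s0 by simp
  have BA: "B ** A = mat 1" unfolding B_def gen2 using s0 by simp
  have Ainv: "matrix_inv A = B"
  proof -
    define M where "M = matrix_inv A"
    have "A ** M = mat 1 \<and> M ** A = mat 1" unfolding M_def matrix_inv_def
      by (rule someI[of _ B]) (simp add: AB BA)
    have "M = M ** (A ** B)" by (simp add: AB)
    also have "\<dots> = (M ** A) ** B" by (simp add: matrix_mul_assoc)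
    also have "\<dots> = B" using \<open>A ** M = mat 1 \<and> M ** A = mat 1\<close> by simp
    finally show ?thesis by (simp add: M_def)
  qed
  show ?thesis
  proof (intro exI[of _ L] conjI allI Ld)
    fix x0 y0 x1 y1 :: real
    have lhs: "scheme_res H \<delta> (xb, pb, xb, pb) + L (x0, y0, x1, y1) = 0 \<longleftrightarrow>
       ((x1-x0)*(K+Hxp)/2 - (Hxp*x1 + Hpp*(y0+y1)/2) - Hp = 0 \<and>
          (y1-y0)*(K+Hxp)/2 + (Hxp*y0 + Hxx*(x0+x1)/2) + Hx = 0)"
    proof -
      have f1: "-Hp + ((x1-x0)/\<delta> - (Hxp*x1 + Hpp*(y0+y1)/2)) = (x1-x0)*(K+Hxp)/2 - (Hxp*x1 + Hpp*(y0+y1)/2) - Hp"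
        by (simp add: \<delta>_def K_def algebra_simps)
      have f2: "Hx + ((y1-y0)/\<delta> + (Hxp*y0 + Hxx*(x0+x1)/2)) = (y1-y0)*(K+Hxp)/2 + (Hxp*y0 + Hxx*(x0+x1)/2) + Hx"
        by (simp add: \<delta>_def K_def algebra_simps)
      show ?thesis unfolding base Lval zero_prod_def plus_prod_def f1[symmetric] f2[symmetric] by simp
    qed
    define g1 where "g1 = -(Hxp*Hp - Hpp*Hx)/s"
    define g2 where "g2 = -(-Hxx*Hp + Hxp*Hx)/s"
    have e1: "exact_step H xb pb h (vector [x0, y0]) $ 1 = C*x0 + D*(Hxp*x0 + Hpp*y0) + (C-1)*g1 + D*(Hxp*g1 + Hpp*g2)"
      unfolding exact_step_def A_def[symmetric] E Ainv B_def
      apply (simp add: Fvec_def Hp_def[symmetric] Hx_def[symmetric]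
          matrix_vector_mult_def sum_2 mat_def Aent g1_def g2_def)
      using s0 apply (simp add: field_simps; simp add: algebra_simps)
      done
    have e2: "exact_step H xb pb h (vector [x0, y0]) $ 2 = C*y0 + D*(-Hxx*x0 - Hxp*y0) + (C-1)*g2 + D*(-Hxx*g1 - Hxp*g2)"
      unfolding exact_step_def A_def[symmetric] E Ainv B_def
      apply (simp add: Fvec_def Hp_def[symmetric] Hx_def[symmetric]
          matrix_vector_mult_def sum_2 mat_def Aent g1_def g2_def)
      using s0 apply (simp add: field_simps; simp add: algebra_simps)
      done
    show "scheme_res H \<delta> (xb, pb, xb, pb) + L (x0, y0, x1, y1) = 0 \<longleftrightarrow>
          vector [x1, y1] = exact_step H xb pb h (vector [x0, y0])"
    proof -
      have sdef: "s = Hxx*Hpp - Hxp^2" by (simp add: s_def)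
      have veq: "vector[x1,y1] = v \<longleftrightarrow> x1 = v$1 \<and> y1 = v$2" for v :: "real^2"
        by (auto simp: vec_eq_iff forall_2)
      show ?thesis unfolding lhs veq e1 e2 g1_def g2_def
        using alg[OF CD(3) CD(4) s0 sdef CD(5), where xA=x0 and yA=y0 and xB=x1 and yB=y1 and Hp=Hp and Hx=Hx]
        by simp
    qed
  qed
qed


end
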